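(* Let $p\geq 3$ be a prime and $s$ a positive integer. Then for every integer $n>p^{s}$ we have $$\nu_{p}\big(A_{p,(p-1)(p^s-1)}(n)\big)=1.$$
   Context: For an integer $m\geq 2$ and a positive integer $k$, the integers $A_{m,k}(n)$, $n\in\mathbb{N}=\{0,1,2,\ldots\}$, are defined by the formal power series identity $\prod_{i=0}^{\infty}\big(1-x^{m^{i}}\big)^{-k}=\sum_{n=0}^{\infty}A_{m,k}(n)x^{n}$. For a prime $p$, $\nu_p(n)$ denotes the $p$-adic valuation of the integer $n$, with $\nu_p(0)=+\infty$. *)

theory Defs
  imports "HOL-Computational_Algebra.Computational_Algebra"
begin

text \<open>Coefficients of prod_{i>=0} (1 - x^(m^i))^(-k), computed in rat fps.
  Only factors with m^i <= n influence the coefficient of x^n; since m >= 2 gives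
  m^i > n for i > n, truncating the product to i < n+1 is exact.\<close>
definition A_rat :: "nat \<Rightarrow> nat \<Rightarrow> nat \<Rightarrow> rat" where
  "A_rat m k n = fps_nth (\<Prod>i<Suc n. (inverse (1 - fps_X ^ (m ^ i) :: rat fps)) ^ k) n"

definition A :: "nat \<Rightarrow> nat \<Rightarrow> nat \<Rightarrow> int" where
  "A m k n = (THE a::int. of_int a = A_rat m k n)"

end

theory Submission
  imports Defs
begin

definition cg :: "int \<Rightarrow> int fps \<Rightarrow> int fps \<Rightarrow> bool" where
  "cg q f g \<longleftrightarrow> (\<exists>h. f = g + fps_const q * h)"

lemma cgI: "f = g + fps_const q * h \<Longrightarrow> cg q f g"
  unfolding cg_def by blast

lemma cg_refl[simp]: "cg q f f"
  by (rule cgI[where h=0]) simp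

lemma cg_sym: "cg q f g \<Longrightarrow> cg q g f"
  unfolding cg_def by (metis add_diff_cancel diff_add_cancel minus_mult_right uminus_add_conv_diff add.commute)

lemma cg_trans: "cg q f g \<Longrightarrow> cg q g k \<Longrightarrow> cg q f k"
  unfolding cg_def by (metis add.assoc distrib_left)

lemma cg_add: "cg q f g \<Longrightarrow> cg q f' g' \<Longrightarrow> cg q (f + f') (g + g')"
  unfolding cg_def by (metis (no_types, lifting) add.assoc add.left_commute distrib_left)

lemma cg_mult: "cg q f g \<Longrightarrow> cg q f' g' \<Longrightarrow> cg q (f * f') (g * g')"
proof -
  assume "cg q f g" "cg q f' g'"
  then obtain h h' where "f = g + fps_const q * h" "f' = g' + fps_const q * h'"
    unfolding cg_def by blast
  then have "f * f' = g * g' + fps_const q * (h * g' + g * h' + fps_const q * h * h')"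
    by (simp add: algebra_simps)
  then show ?thesis by (rule cgI)
qed

lemma cg_power: "cg q f g \<Longrightarrow> cg q (f ^ k) (g ^ k)"
  by (induction k) (auto intro: cg_mult)

lemma cg_nth: "cg q f g \<Longrightarrow> q dvd (f $ n - g $ n)"
  unfolding cg_def by auto

lemma cg_weaken: "cg (q * r) f g \<Longrightarrow> cg q f g"
  unfolding cg_def by (metis fps_const_mult mult.assoc)

definition geo :: "nat \<Rightarrow> int fps" where
  "geo m = Abs_fps (\<lambda>j. if m dvd j then 1 else 0)"

lemma geo_inv: assumes "m > 0" shows "(1 - fps_X ^ m) * geo m = 1"
proof (rule fps_ext)
  fix j
  have "((1 - fps_X ^ m) * geo m) $ j = geo m $ j - (fps_X ^ m * geo m) $ j"
    by (simp add: algebra_simps)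
  also have "\<dots> = (1::int fps) $ j"
    using assms by (auto simp: fps_X_power_mult_nth geo_def dvd_minus_self elim: dvdE)
  finally show "((1 - fps_X ^ m) * geo m) $ j = (1::int fps) $ j" .
qed

definition fmap :: "int fps \<Rightarrow> rat fps" where
  "fmap f = Abs_fps (\<lambda>n. of_int (f $ n))"

lemma fmap_nth[simp]: "fmap f $ n = of_int (f $ n)"
  by (simp add: fmap_def)

lemma fmap_mult: "fmap (f * g) = fmap f * fmap g"
  by (rule fps_ext) (simp add: fps_mult_nth)

lemma fmap_1: "fmap 1 = 1"
  by (rule fps_ext) simp

lemma fmap_diff: "fmap (f - g) = fmap f - fmap g"
  by (rule fps_ext) simp

lemma fmap_Xp: "fmap (fps_X ^ m) = fps_X ^ m"
  by (rule fps_ext) simp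

lemma fmap_power: "fmap (f ^ k) = fmap f ^ k"
  by (induction k) (simp_all add: fmap_1 fmap_mult)

lemma fmap_prod: "fmap (\<Prod>i\<in>S. f i) = (\<Prod>i\<in>S. fmap (f i))"
  by (induction S rule: infinite_finite_induct) (simp_all add: fmap_1 fmap_mult)

lemma A_eq:
  assumes "m > 0"
  shows "A m k n = (\<Prod>i<Suc n. geo (m ^ i)) ^ k $ n"
proof -
  have inv: "inverse (1 - fps_X ^ (m ^ i) :: rat fps) = fmap (geo (m ^ i))" for i
  proof (rule fps_inverse_unique)
    have "fmap ((1 - fps_X ^ (m ^ i)) * geo (m ^ i)) = 1"
      using geo_inv[of "m ^ i"] assms by (simp add: fmap_1)
    then show "(1 - fps_X ^ (m ^ i)) * fmap (geo (m ^ i)) = 1"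
      by (simp add: fmap_mult fmap_diff fmap_1 fmap_Xp)
  qed
  have "A_rat m k n = fmap ((\<Prod>i<Suc n. geo (m ^ i)) ^ k) $ n"
    unfolding A_rat_def inv fmap_power fmap_prod
    by (simp only: prod_power_distrib)
  then have "A_rat m k n = of_int ((\<Prod>i<Suc n. geo (m ^ i)) ^ k $ n)" by simp
  then show ?thesis unfolding A_def by (intro the_equality) simp_all
qed

definition ell :: "nat \<Rightarrow> nat \<Rightarrow> int" where
  "ell p j = - ((-1) ^ j * (int (p choose j) div int p))"

definition D :: "nat \<Rightarrow> nat \<Rightarrow> int fps" where
  "D p m = (\<Sum>j\<in>{1..p-1}. fps_const (ell p j) * fps_X ^ (m * j))"

lemma binom_expand:
  assumes p: "prime p" "odd p"
  shows "(1 - fps_X ^ m :: int fps) ^ p = (1 - fps_X ^ (p * m)) - fps_const (int p) * D p m"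
proof -
  have p1: "p \<ge> 1" using prime_gt_0_nat[OF p(1)] by simp
  have "(1 - fps_X ^ m :: int fps) ^ p = (- (fps_X ^ m) + 1) ^ p" by simp
  also have "\<dots> = (\<Sum>k\<le>p. of_nat (p choose k) * (- (fps_X ^ m)) ^ k * 1 ^ (p - k))"
    by (rule binomial_ring)
  also have "{..p} = insert 0 (insert p {1..p-1})" using p1 by auto
  also have "(\<Sum>k\<in>insert 0 (insert p {1..p-1}). of_nat (p choose k) * (- (fps_X ^ m :: int fps)) ^ k * 1 ^ (p - k))
     = 1 + (- (fps_X ^ (p * m)) + (\<Sum>k\<in>{1..p-1}. of_nat (p choose k) * (- (fps_X ^ m)) ^ k))"
    using p1 p by (simp add: power_minus_odd power_mult mult.commute)
  also have "(\<Sum>k\<in>{1..p-1}. of_nat (p choose k) * (- (fps_X ^ m :: int fps)) ^ k)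
      = (\<Sum>k\<in>{1..p-1}. - (fps_const (int p) * (fps_const (ell p k) * fps_X ^ (m * k))))"
  proof (rule sum.cong[OF refl])
    fix k assume k: "k \<in> {1..p-1}"
    have "p dvd (p choose k)" using k p by (intro dvd_choose_prime) auto
    then obtain c where c: "p choose k = p * c" by (elim dvdE)
    have pp: "int p > 0" using p prime_gt_0_nat by simp
    have H1: "fps_const (int p) * fps_const (ell p k) = - fps_const ((-1)^k * int (p choose k))"
      unfolding ell_def fps_const_mult[symmetric] c using pp by simp
    have H2: "(- (fps_X ^ m :: int fps)) ^ k = fps_const ((-1)^k) * fps_X ^ (m * k)"
    proof -
      have m1: "fps_const ((-1::int)^k) = (-1)^k" by (metis fps_const_neg fps_const_1_eq_1 fps_const_power)
      show ?thesis unfolding m1 power_minus[of "fps_X ^ m" k] by (simp add: power_mult)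
    qed
    have "of_nat (p choose k) * (- (fps_X ^ m :: int fps)) ^ k
        = fps_const (int (p choose k)) * fps_const ((-1)^k) * fps_X ^ (m * k)"
      unfolding H2 fps_of_nat by (simp only: mult.assoc)
    also have "\<dots> = fps_const ((-1)^k * int (p choose k)) * fps_X ^ (m * k)"
      by (simp add: mult.commute)
    also have "\<dots> = - (fps_const (int p) * fps_const (ell p k)) * fps_X ^ (m * k)"
      unfolding H1 by simp
    also have "\<dots> = - (fps_const (int p) * (fps_const (ell p k) * fps_X ^ (m * k)))"
      by (simp only: mult.assoc minus_mult_left)
    finally show "of_nat (p choose k) * (- (fps_X ^ m :: int fps)) ^ k
        = - (fps_const (int p) * (fps_const (ell p k) * fps_X ^ (m * k)))" .
  qed
  also have "\<dots> = - (fps_const (int p) * D p m)"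
    unfolding D_def by (simp add: sum_distrib_left sum_negf)
  finally show ?thesis by simp
qed

definition rho :: "nat \<Rightarrow> nat \<Rightarrow> int fps" where
  "rho p m = D p m * geo (p * m)"

lemma geo_pow_p:
  assumes p: "prime p" "odd p" and m: "m > 0"
  shows "cg (int p ^ 2) (geo m ^ p) (geo (p * m) * (1 + fps_const (int p) * rho p m))"
proof -
  define Y where "Y = geo m ^ p"
  define G where "G = geo (p * m)"
  define E where "E = (1 - fps_X ^ (p * m) :: int fps)"
  define P where "P = fps_const (int p)"
  have "Y * (1 - fps_X ^ m) ^ p = 1"
    unfolding Y_def power_mult_distrib[symmetric] using geo_inv[OF m] by (simp add: mult.commute)
  then have h1: "Y * (E - P * D p m) = 1"
    unfolding binom_expand[OF p] E_def P_def .
  have h2: "E * G = 1" unfolding E_def G_def using geo_inv[of "p * m"] m p prime_gt_0_nat by simp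
  define Z where "Z = P * (D p m * G)"
  have "Y * (1 - Z) = Y * (E * G) - Y * Z" using h2 by (simp add: algebra_simps)
  also have "\<dots> = Y * (E - P * D p m) * G" unfolding Z_def by (simp add: algebra_simps)
  also have "\<dots> = G" unfolding h1 by simp
  finally have h4: "G = Y * (1 - Z)" by simp
  have "G * (1 + Z) + Z ^ 2 * Y = Y * ((1 - Z) * (1 + Z) + Z ^ 2)"
    unfolding h4 by (simp add: algebra_simps)
  also have "(1 - Z) * (1 + Z) + Z ^ 2 = 1"
    by (simp add: algebra_simps power2_eq_square)
  finally have hY: "Y = G * (1 + Z) + Z ^ 2 * Y" by simp
  have Zr: "Z = P * rho p m" unfolding Z_def G_def rho_def by simp
  have Z2: "Z ^ 2 * Y = fps_const (int p ^ 2) * (rho p m ^ 2 * Y)"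
    unfolding Zr P_def by (simp add: power_mult_distrib mult.assoc)
  have "Y = G * (1 + P * rho p m) + fps_const (int p ^ 2) * (rho p m ^ 2 * Y)"
    using hY unfolding Z2 unfolding Zr .
  then show ?thesis
    unfolding Y_def G_def P_def by (rule cgI)
qed

declare cg_trans[trans]

lemma cg_lin:
  "cg (q^2) ((1 + fps_const q * a) * (1 + fps_const q * b)) (1 + fps_const q * (a + b))"
proof (rule cgI[where h="a*b"])
  have "(1 + fps_const q * a) * (1 + fps_const q * b)
      = 1 + fps_const q * (a + b) + fps_const (q * q) * (a*b)"
    by (simp add: algebra_simps)
  then show "(1 + fps_const q * a) * (1 + fps_const q * b) = 1 + fps_const q * (a + b) + fps_const (q^2) * (a*b)"
    by (simp add: power2_eq_square)
qed

lemma pow_lin: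
  "cg (q^2) ((1 + fps_const q * a) ^ K) (1 + fps_const q * (fps_const (int K) * a))"
proof (induction K)
  case 0 then show ?case by simp
next
  case (Suc K)
  have "cg (q^2) ((1 + fps_const q * a) ^ Suc K) ((1 + fps_const q * (fps_const (int K) * a)) * (1 + fps_const q * a))"
    unfolding power_Suc2 by (rule cg_mult[OF Suc.IH cg_refl])
  also have "cg (q^2) \<dots> (1 + fps_const q * (fps_const (int K) * a + a))"
    by (rule cg_lin)
  also have "fps_const (int K) * a + a = fps_const (int (Suc K)) * a"
    by (simp add: algebra_simps fps_const_add[symmetric])
  finally show ?case .
qed

lemma geo_low: assumes "0 < M" "n < M" shows "(h * geo M) $ n = h $ n"
proof -
  have "geo M = 1 + fps_X ^ M * geo M"
    using geo_inv[OF assms(1)] by (simp add: algebra_simps)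
  then have "h * geo M = h + fps_X ^ M * (h * geo M)"
    by (metis distrib_left mult.left_commute mult.right_neutral)
  then have "(h * geo M) $ n = (h + fps_X ^ M * (h * geo M)) $ n"
    by (rule arg_cong[where f="\<lambda>x. x $ n"])
  then show ?thesis using assms(2) by (simp add: fps_X_power_mult_nth)
qed

lemma geo_pow_low: assumes "0 < M" "n < M" shows "(f * geo M ^ K) $ n = f $ n"
proof (induction K)
  case 0 then show ?case by simp
next
  case (Suc K)
  have "(f * geo M ^ Suc K) $ n = ((f * geo M ^ K) * geo M) $ n"
    by (simp add: mult_ac)
  also have "\<dots> = (f * geo M ^ K) $ n" by (rule geo_low[OF assms])
  finally show ?case using Suc.IH by simp
qed

lemma one_minus_X_pow_nth: "K < j \<Longrightarrow> ((1 - fps_X) ^ K :: int fps) $ j = 0"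
proof (induction K arbitrary: j)
  case 0 then show ?case by simp
next
  case (Suc K)
  have eq: "((1 - fps_X) ^ Suc K :: int fps) = (1 - fps_X) ^ K - fps_X * (1 - fps_X) ^ K"
    by (simp add: algebra_simps)
  show ?case unfolding eq using Suc.IH[of j] Suc.IH[of "j - 1"] Suc.prems by (simp del: power_Suc)
qed

lemma phi_nth: "((1 - fps_X ^ L) * geo 1 :: int fps) $ i = (if i < L then 1 else 0)"
proof -
  have "(1 - fps_X ^ L) * geo 1 = geo 1 - fps_X ^ L * geo 1" by (simp add: algebra_simps)
  then show ?thesis by (simp add: fps_X_power_mult_nth geo_def)
qed

lemma window_conv:
  assumes "L \<le> n"
  shows "(((1 - fps_X ^ L) * geo 1) * R) $ n = (\<Sum>N\<in>{n+1-L..<n+1}. R $ N)"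
proof -
  have "(((1 - fps_X ^ L) * geo 1) * R) $ n = (\<Sum>i=0..n. (if i < L then 1 else 0) * R $ (n - i))"
    unfolding fps_mult_nth[of "(1 - fps_X ^ L) * geo 1" R] phi_nth by simp
  also have "\<dots> = (\<Sum>i\<in>{0..<L}. R $ (n - i))"
    by (rule sum.mono_neutral_cong_right) (use assms in auto)
  also have "\<dots> = (\<Sum>N\<in>{n+1-L..<n+1}. R $ N)"
    by (rule sum.reindex_bij_witness[where i="\<lambda>N. n - N" and j="\<lambda>i. n - i"]) (use assms in auto)
  finally show ?thesis .
qed

context
  fixes p :: nat
  assumes pp: "prime p" "odd p"
begin

lemma p_pos: "p > 0" using pp prime_gt_0_nat by simp

lemma F_pow:
  "cg (int p ^ 2) ((\<Prod>i<N. geo (p^i)) ^ p)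
     ((\<Prod>i<N. geo (p ^ Suc i)) * (1 + fps_const (int p) * (\<Sum>i<N. rho p (p^i))))"
proof (induction N)
  case 0 then show ?case by simp
next
  case (Suc N)
  let ?P = "fps_const (int p)"
  let ?A = "\<Prod>i<N. geo (p ^ Suc i)"
  let ?R = "\<Sum>i<N. rho p (p^i)"
  have g: "cg (int p ^ 2) (geo (p^N) ^ p) (geo (p ^ Suc N) * (1 + ?P * rho p (p^N)))"
    using geo_pow_p[OF pp, of "p^N"] p_pos by simp
  have "cg (int p^2) ((\<Prod>i<Suc N. geo (p^i)) ^ p)
      ((?A * (1 + ?P * ?R)) * (geo (p ^ Suc N) * (1 + ?P * rho p (p^N))))"
    unfolding prod.lessThan_Suc power_mult_distrib by (rule cg_mult[OF Suc.IH g])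
  also have "(?A * (1 + ?P * ?R)) * (geo (p ^ Suc N) * (1 + ?P * rho p (p^N)))
      = (?A * geo (p ^ Suc N)) * ((1 + ?P * ?R) * (1 + ?P * rho p (p^N)))"
    by (simp only: mult_ac)
  also have "cg (int p^2) \<dots> ((?A * geo (p ^ Suc N)) * (1 + ?P * (?R + rho p (p^N))))"
    by (rule cg_mult[OF cg_refl cg_lin])
  finally show ?case by simp
qed

lemma prod_shift: "geo 1 * (\<Prod>i<N. geo (p ^ Suc i)) = (\<Prod>i<N. geo (p^i)) * geo (p^N)"
proof (induction N)
  case 0 then show ?case by simp
next
  case (Suc N)
  have "geo 1 * (\<Prod>i<Suc N. geo (p ^ Suc i)) = (geo 1 * (\<Prod>i<N. geo (p ^ Suc i))) * geo (p ^ Suc N)"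
    by (simp add: mult_ac)
  then show ?case unfolding Suc.IH by simp
qed

lemma Ginv: "(\<Prod>i<N. geo (p^i)) * (\<Prod>i<N. (1 - fps_X ^ (p^i))) = 1"
proof -
  have "(\<Prod>i<N. geo (p^i)) * (\<Prod>i<N. (1 - fps_X ^ (p^i))) = (\<Prod>i<N. geo (p^i) * (1 - fps_X ^ (p^i)))"
    by (simp only: prod.distrib)
  also have "\<dots> = 1" using geo_inv p_pos by (simp add: mult.commute)
  finally show ?thesis .
qed

lemma Fpm1:
  "cg (int p ^ 2) ((\<Prod>i<N. geo (p^i)) ^ (p - 1))
     ((1 - fps_X) * geo (p^N) * (1 + fps_const (int p) * (\<Sum>i<N. rho p (p^i))))"
proof -
  define F where "F = (\<Prod>i<N. geo (p^i))"
  define G where "G = (\<Prod>i<N. (1 - fps_X ^ (p^i) :: int fps))"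
  define A where "A = (\<Prod>i<N. geo (p ^ Suc i))"
  define S where "S = 1 + fps_const (int p) * (\<Sum>i<N. rho p (p^i))"
  have FG: "F * G = 1" unfolding F_def G_def by (rule Ginv)
  have X1: "(1 - fps_X) * geo 1 = 1" using geo_inv[of 1] by simp
  have sh: "geo 1 * A = F * geo (p^N)" unfolding A_def F_def by (rule prod_shift)
  have "F ^ (p - 1) = F ^ (p - 1) * (F * G)" using FG by simp
  also have "\<dots> = F ^ p * G"
    using p_pos by (metis mult.assoc power_minus_mult)
  finally have e1: "F ^ (p - 1) = F ^ p * G" .
  have "A * S * G = ((1 - fps_X) * geo 1) * A * S * G" using X1 by simp
  also have "\<dots> = (1 - fps_X) * (geo 1 * A) * S * G" by (simp only: mult_ac)
  also have "\<dots> = (1 - fps_X) * geo (p^N) * S * (F * G)" unfolding sh by (simp only: mult_ac)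
  finally have e2: "A * S * G = (1 - fps_X) * geo (p^N) * S" using FG by simp
  have "cg (int p ^ 2) (F ^ p * G) (A * S * G)"
    unfolding F_def A_def S_def by (rule cg_mult[OF F_pow cg_refl])
  then show ?thesis using e1 e2 unfolding F_def[symmetric] S_def[symmetric] by simp
qed

lemma Fk:
  assumes "s \<ge> 1"
  shows "cg (int p ^ 2) ((\<Prod>i<N. geo (p^i)) ^ ((p - 1) * (p^s - 1)))
     ((1 - fps_X) ^ (p^s - 1) * geo (p^N) ^ (p^s - 1) * (1 - fps_const (int p) * (\<Sum>i<N. rho p (p^i))))"
proof -
  define K where "K = p^s - 1"
  define R where "R = (\<Sum>i<N. rho p (p^i))"
  define P where "P = fps_const (int p)"
  have ps: "p^s = p * p^(s-1)" using assms by (cases s) simp_all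
  have "int K + 1 = int (p^s)" unfolding K_def using p_pos by (simp add: of_nat_diff)
  then have K1: "int K + 1 = int p * int p ^ (s - 1)" unfolding ps by simp
  have "cg (int p ^ 2) ((\<Prod>i<N. geo (p^i)) ^ ((p - 1) * K)) (((1 - fps_X) * geo (p^N) * (1 + P * R)) ^ K)"
    unfolding power_mult P_def R_def by (rule cg_power[OF Fpm1])
  also have "((1 - fps_X) * geo (p^N) * (1 + P * R)) ^ K = (1 - fps_X) ^ K * geo (p^N) ^ K * (1 + P * R) ^ K"
    by (simp add: power_mult_distrib)
  also have "cg (int p ^ 2) \<dots> ((1 - fps_X) ^ K * geo (p^N) ^ K * (1 + P * (fps_const (int K) * R)))"
    unfolding P_def by (rule cg_mult[OF cg_refl pow_lin])
  also have "cg (int p ^ 2) \<dots> ((1 - fps_X) ^ K * geo (p^N) ^ K * (1 - P * R))"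
  proof (rule cg_mult[OF cg_refl cgI[where h="fps_const (int p ^ (s - 1)) * R"]])
    have "fps_const (int K) = fps_const (int K + 1) - 1" by simp
    also have "\<dots> = fps_const (int p) * fps_const (int p ^ (s - 1)) - 1" unfolding K1 by simp
    finally have KK: "fps_const (int K) = fps_const (int p) * fps_const (int p ^ (s - 1)) - 1" .
    have pq: "fps_const (int p ^ 2) = fps_const (int p) * fps_const (int p)" by (simp add: power2_eq_square)
    show "1 + P * (fps_const (int K) * R) = 1 - P * R + fps_const (int p ^ 2) * (fps_const (int p ^ (s - 1)) * R)"
      unfolding KK pq P_def by (simp only: algebra_simps mult_1_left mult_1_right)
  qed
  finally show ?thesis unfolding K_def R_def P_def .
qed

lemma frob: "cg (int p) ((1 - fps_X) ^ (p^s)) (1 - fps_X ^ (p^s))"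
proof (induction s)
  case 0 then show ?case by simp
next
  case (Suc s)
  have "(1 - fps_X :: int fps) ^ (p ^ Suc s) = ((1 - fps_X) ^ (p^s)) ^ p"
    by (simp add: power_mult[symmetric] mult.commute)
  also have "cg (int p) \<dots> ((1 - fps_X ^ (p^s)) ^ p)" by (rule cg_power[OF Suc.IH])
  also have "(1 - fps_X ^ (p^s) :: int fps) ^ p = (1 - fps_X ^ (p ^ Suc s)) - fps_const (int p) * D p (p^s)"
    by (simp add: binom_expand[OF pp])
  also have "cg (int p) \<dots> (1 - fps_X ^ (p ^ Suc s))"
    by (rule cgI[where h="- D p (p^s)"]) simp
  finally show ?case .
qed

lemma phi:
  assumes "s \<ge> 1"
  shows "cg (int p) ((1 - fps_X) ^ (p^s - 1)) ((1 - fps_X ^ (p^s)) * geo 1)"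
proof -
  have X1: "(1 - fps_X) * geo 1 = 1" using geo_inv[of 1] by simp
  have "(1 - fps_X :: int fps) ^ (p^s - 1) = (1 - fps_X) ^ (p^s - 1) * ((1 - fps_X) * geo 1)"
    using X1 by simp
  also have "\<dots> = (1 - fps_X) ^ (p^s) * geo 1"
    using p_pos by (simp add: mult.assoc[symmetric] power_Suc2[symmetric])
  also have "cg (int p) \<dots> ((1 - fps_X ^ (p^s)) * geo 1)"
    by (rule cg_mult[OF frob cg_refl])
  finally show ?thesis .
qed

end

lemma D_nth:
  assumes "m > 0"
  shows "D p m $ N = (if m dvd N \<and> N div m \<in> {1..p-1} then ell p (N div m) else 0)"
proof -
  have "D p m $ N = (\<Sum>j\<in>{1..p-1}. ell p j * (if N = m * j then 1 else 0))"
    unfolding D_def fps_sum_nth by simp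
  also have "\<dots> = (\<Sum>j\<in>{1..p-1}. if j = N div m then (if m dvd N then ell p j else 0) else 0)"
    by (rule sum.cong[OF refl]) (use assms in auto)
  also have "\<dots> = (if m dvd N \<and> N div m \<in> {1..p-1} then ell p (N div m) else 0)"
    by (subst sum.delta) auto
  finally show ?thesis .
qed

definition rr :: "nat \<Rightarrow> nat \<Rightarrow> int fps" where
  "rr p m = Abs_fps (\<lambda>N. if m dvd N \<and> \<not> p dvd (N div m) then ell p ((N div m) mod p) else 0)"

lemma rr_D:
  assumes m: "m > 0" and p: "p > 1"
  shows "rr p m * (1 - fps_X ^ (p * m)) = D p m"
proof (rule fps_ext)
  fix N
  have e: "rr p m * (1 - fps_X ^ (p * m)) = rr p m - fps_X ^ (p * m) * rr p m" by (simp add: algebra_simps)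
  have "(rr p m * (1 - fps_X ^ (p * m))) $ N = rr p m $ N - (if N < p * m then 0 else rr p m $ (N - p * m))"
    unfolding e by (simp add: fps_X_power_mult_nth)
  also have "\<dots> = D p m $ N"
  proof (cases "m dvd N")
    case False
    then have "\<not> m dvd (N - p * m)" if "N \<ge> p * m"
      using that by (metis dvd_diff_nat dvd_triv_right le_add_diff_inverse dvd_add_right_iff)
    then show ?thesis using False unfolding D_nth[OF m] rr_def by auto
  next
    case True
    then obtain q where q: "N = m * q" by (elim dvdE)
    show ?thesis
    proof (cases "q < p")
      case True
      then have "N < p * m" using q m by (simp add: mult.commute)
      moreover have "p dvd q \<longleftrightarrow> q = 0" using True by (auto dest: dvd_imp_le)
      ultimately show ?thesis unfolding D_nth[OF m] rr_def using q m True by auto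
    next
      case False
      then have ge: "N \<ge> p * m" using q m by (simp add: mult.commute)
      have e2: "N - p * m = m * (q - p)" using q by (simp add: diff_mult_distrib2 mult.commute)
      have d1: "p dvd (q - p) \<longleftrightarrow> p dvd q" using False by (simp add: dvd_minus_self)
      have d2: "(q - p) mod p = q mod p" using False by (simp add: le_mod_geq)
      have d3: "(N - p * m) div m = q - p" "N div m = q" using e2 q m by simp_all
      have "rr p m $ N = rr p m $ (N - p * m)"
        unfolding rr_def using d1 d2 d3 e2 q by simp
      moreover have "N div m \<notin> {1..p-1}" using d3 False by auto
      ultimately show ?thesis unfolding D_nth[OF m] using ge by auto
    qed
  qed
  finally show "(rr p m * (1 - fps_X ^ (p * m))) $ N = D p m $ N" .
qed

lemma rho_nth:
  assumes m: "m > 0" and p: "p > 1"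
  shows "rho p m $ N = (if m dvd N \<and> \<not> p dvd (N div m) then ell p ((N div m) mod p) else 0)"
proof -
  have "rho p m = rr p m * ((1 - fps_X ^ (p * m)) * geo (p * m))"
    unfolding rho_def rr_D[OF m p, symmetric] by (simp add: mult.assoc)
  also have "\<dots> = rr p m" using geo_inv[of "p * m"] m p by simp
  finally show ?thesis by (simp add: rr_def)
qed

definition u :: "nat \<Rightarrow> nat \<Rightarrow> int" where
  "u p N = ell p ((N div p ^ multiplicity p N) mod p)"

lemma mult_char:
  fixes p N :: nat
  assumes p: "prime p" and N: "N > 0"
  shows "(p ^ i dvd N \<and> \<not> p dvd (N div p ^ i)) \<longleftrightarrow> i = multiplicity p N"
proof
  assume h: "p ^ i dvd N \<and> \<not> p dvd (N div p ^ i)"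
  show "i = multiplicity p N"
  proof (rule sym, rule multiplicity_eqI)
    show "p ^ i dvd N" using h by simp
    show "\<not> p ^ Suc i dvd N"
    proof
      assume "p ^ Suc i dvd N"
      then obtain c where "N = p ^ Suc i * c" by (elim dvdE)
      then have "N = p ^ i * (p * c)" by (simp add: mult_ac)
      then have "N div p ^ i = p * c" using p prime_gt_0_nat by simp
      then show False using h by simp
    qed
  qed
next
  assume "i = multiplicity p N"
  show "p ^ i dvd N \<and> \<not> p dvd (N div p ^ i)"
  proof
    show "p ^ i dvd N" using \<open>i = multiplicity p N\<close> multiplicity_dvd[of p N] by simp
    have N0: "N \<noteq> 0" using N by simp
    have nu: "\<not> is_unit p" using p not_prime_unit by blast
    have "\<not> p dvd N div p ^ multiplicity p N"
      by (rule multiplicity_decompose[OF N0 nu])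
    then show "\<not> p dvd N div p ^ i" using \<open>i = multiplicity p N\<close> by simp
  qed
qed

lemma R_nth:
  assumes p: "prime p" and N: "N > 0" "N \<le> n"
  shows "(\<Sum>i<Suc n. rho p (p ^ i)) $ N = u p N"
proof -
  have p1: "p > 1" using p prime_gt_1_nat by simp
  have "(\<Sum>i<Suc n. rho p (p ^ i)) $ N = (\<Sum>i<Suc n. if i = multiplicity p N then u p N else 0)"
    unfolding fps_sum_nth
  proof (rule sum.cong[OF refl])
    fix i
    show "rho p (p ^ i) $ N = (if i = multiplicity p N then u p N else 0)"
    proof -
      have "rho p (p ^ i) $ N = (if p ^ i dvd N \<and> \<not> p dvd (N div p ^ i) then ell p ((N div p ^ i) mod p) else 0)"
        by (rule rho_nth) (use p1 in auto)
      then show ?thesis using mult_char[OF p N(1), of i] by (auto simp: u_def)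
    qed
  qed
  also have "\<dots> = u p N"
  proof -
    have "p ^ multiplicity p N dvd N" by (rule multiplicity_dvd)
    then have "p ^ multiplicity p N \<le> N" using N by (simp add: dvd_imp_le)
    moreover have "multiplicity p N < 2 ^ multiplicity p N" by simp
    moreover have "2 ^ multiplicity p N \<le> p ^ multiplicity p N"
      using p1 by (simp add: power_mono)
    ultimately have "multiplicity p N < Suc n" using N by linarith
    then show ?thesis by simp
  qed
  finally show ?thesis .
qed

lemma binom_split:
  assumes p: "prime p" and j: "j \<in> {1..p-1}"
  obtains c where "p choose j = p * c" "ell p j = - ((-1)^j * int c)"
proof -
  have "p dvd (p choose j)" using j p by (intro dvd_choose_prime) auto
  then obtain c where c: "p choose j = p * c" by (elim dvdE)
  have "int p > 0" using p prime_gt_0_nat by simp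
  then have "ell p j = - ((-1)^j * int c)" unfolding ell_def c by simp
  then show ?thesis using c that by blast
qed

lemma ell_sum:
  assumes p: "prime p" "odd p"
  shows "(\<Sum>j\<in>{1..p-1}. ell p j) = 0"
proof -
  have p1: "p \<ge> 1" using prime_gt_0_nat[OF p(1)] by simp
  have each: "int p * ell p j = - ((-1)^j * int (p choose j))" if j: "j \<in> {1..p-1}" for j
  proof -
    obtain c where "p choose j = p * c" "ell p j = - ((-1)^j * int c)" using binom_split[OF p(1) j] .
    then show ?thesis by (simp add: algebra_simps)
  qed
  have alt: "(\<Sum>j\<le>p. (-1)^j * int (p choose j)) = 0"
    by (rule choose_alternating_sum) (use p1 in simp)
  have "{..p} = insert 0 (insert p {1..p-1})" using p1 by auto
  then have "(\<Sum>j\<le>p. (-1)^j * int (p choose j)) = 1 + ((-1)^p + (\<Sum>j\<in>{1..p-1}. (-1)^j * int (p choose j)))"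
    using p1 by simp
  then have mid: "(\<Sum>j\<in>{1..p-1}. (-1)^j * int (p choose j)) = 0"
    using alt p(2) by simp
  have "int p * (\<Sum>j\<in>{1..p-1}. ell p j) = (\<Sum>j\<in>{1..p-1}. int p * ell p j)"
    by (simp add: sum_distrib_left)
  also have "\<dots> = - (\<Sum>j\<in>{1..p-1}. (-1)^j * int (p choose j))"
    using each by (simp add: sum_negf)
  finally have "int p * (\<Sum>j\<in>{1..p-1}. ell p j) = 0" using mid by simp
  then show ?thesis using p1 by simp
qed

lemma ell_nz:
  assumes p: "prime p" and j: "j \<in> {1..p-1}"
  shows "\<not> int p dvd ell p j"
proof
  assume dv: "int p dvd ell p j"
  obtain c where c: "p choose j = p * c" "ell p j = - ((-1)^j * int c)" using binom_split[OF p j] .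
  have ab: "\<bar>ell p j\<bar> = int c" unfolding c(2) by (simp add: abs_mult power_abs)
  have "int p dvd \<bar>ell p j\<bar>" using dv by simp
  then have "int p dvd int c" unfolding ab .
  then have pc: "p dvd c" by simp
  have "j * (p choose j) = p * ((p - 1) choose (j - 1))" using j by (intro times_binomial_minus1_eq) auto
  then have "p * (j * c) = p * ((p - 1) choose (j - 1))" unfolding c(1) by (simp add: mult_ac)
  then have jc: "j * c = (p - 1) choose (j - 1)" using p prime_gt_0_nat by simp
  have "p dvd j * c" using pc by (rule dvd_mult)
  then have pb: "p dvd ((p - 1) choose (j - 1))" unfolding jc .
  have "fact (j - 1) * fact ((p - 1) - (j - 1)) * ((p - 1) choose (j - 1)) = (fact (p - 1) :: nat)"
    using j by (intro binomial_fact_lemma) auto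
  then have "((p - 1) choose (j - 1)) dvd (fact (p - 1) :: nat)" by (metis dvd_triv_right)
  then have "p dvd (fact (p - 1) :: nat)" using pb by (rule dvd_trans[rotated])
  then have "p \<le> p - 1" using prime_dvd_fact_iff[OF p] by simp
  then show False using p prime_gt_0_nat[OF p] by linarith
qed

lemma u_nz:
  assumes p: "prime p" and N: "N > 0"
  shows "\<not> int p dvd u p N"
proof -
  have N0: "N \<noteq> 0" using N by simp
  have nu: "\<not> is_unit p" using p not_prime_unit by blast
  have "\<not> p dvd N div p ^ multiplicity p N" by (rule multiplicity_decompose[OF N0 nu])
  then have h1: "(N div p ^ multiplicity p N) mod p \<noteq> 0" by (simp add: dvd_eq_mod_eq_0)
  have h2: "(N div p ^ multiplicity p N) mod p < p" using p prime_gt_0_nat by simp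
  have "(N div p ^ multiplicity p N) mod p \<in> {1..p-1}" using h1 h2 by simp
  then show ?thesis unfolding u_def by (rule ell_nz[OF p])
qed

lemma u_nondvd:
  assumes "\<not> p dvd N"
  shows "u p N = ell p (N mod p)"
  unfolding u_def using not_dvd_imp_multiplicity_0[OF assms] by simp

lemma u_mult:
  assumes p: "prime p" and b: "b > 0"
  shows "u p (p * b) = u p b"
proof -
  have b0: "b \<noteq> 0" using b by simp
  have nu: "\<not> is_unit p" using p not_prime_unit by blast
  have p0: "p \<noteq> 0" using p by auto
  have m: "multiplicity p (p * b) = Suc (multiplicity p b)" by (rule multiplicity_times_same[OF b0 nu p0])
  have "(p * b) div p ^ Suc (multiplicity p b) = b div p ^ multiplicity p b"
    using p0 by simp
  then show ?thesis unfolding u_def m by simp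
qed

lemma sum_periodic:
  fixes f :: "nat \<Rightarrow> int"
  assumes per: "\<And>N. f (N + p) = f N" and p: "p > 0"
  shows "(\<Sum>N\<in>{c..<c+p}. f N) = (\<Sum>N\<in>{0..<p}. f N)"
proof (induction c)
  case 0 then show ?case by simp
next
  case (Suc c)
  have e1: "(\<Sum>N\<in>{c..<c+p}. f N) = f c + (\<Sum>N\<in>{Suc c..<c+p}. f N)"
    by (rule sum.atLeast_Suc_lessThan) (use p in simp)
  have e2: "(\<Sum>N\<in>{Suc c..<Suc (c+p)}. f N) = (\<Sum>N\<in>{Suc c..<c+p}. f N) + f (c+p)"
    by (rule sum.atLeastLessThan_Suc) (use p in simp)
  have "f (c + p) = f c" by (rule per)
  then show ?case using e1 e2 Suc.IH by simp
qed

lemma sum_blocks: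
  fixes f :: "nat \<Rightarrow> int"
  assumes per: "\<And>N. f (N + p) = f N" and p: "p > 0"
  shows "(\<Sum>N\<in>{c..<c+p*L}. f N) = int L * (\<Sum>N\<in>{0..<p}. f N)"
proof (induction L)
  case 0 then show ?case by simp
next
  case (Suc L)
  have "(\<Sum>N\<in>{c..<c+p*L}. f N) + (\<Sum>N\<in>{c+p*L..<c+p*L+p}. f N) = (\<Sum>N\<in>{c..<c+p*L+p}. f N)"
    by (rule sum.atLeastLessThan_concat) simp_all
  moreover have "(\<Sum>N\<in>{c+p*L..<c+p*L+p}. f N) = (\<Sum>N\<in>{0..<p}. f N)"
    by (rule sum_periodic[where f=f and p=p]) (simp_all add: per p)
  ultimately show ?case using Suc.IH by (simp add: algebra_simps)
qed

lemma div_ceil: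
  fixes a b p :: nat
  assumes "p > 0"
  shows "(a + p - 1) div p \<le> b \<longleftrightarrow> a \<le> p * b"
proof -
  have "(a + p - 1) div p \<le> b \<longleftrightarrow> (a + p - 1) div p < Suc b" by (rule less_Suc_eq_le[symmetric])
  also have "\<dots> \<longleftrightarrow> a + p - 1 < Suc b * p" by (rule div_less_iff_less_mult[OF assms])
  also have "\<dots> \<longleftrightarrow> a \<le> p * b" using assms by (cases p) (auto simp: algebra_simps)
  finally show ?thesis .
qed

lemma div_ceil2:
  fixes a b p L :: nat
  assumes "p > 0"
  shows "b < (a + p - 1) div p + L \<longleftrightarrow> p * b < a + p * L"
proof -
  define x where "x = a + p - 1"
  have "(a + p * L + p - 1) = x + L * p" unfolding x_def using assms by (cases p) (simp_all add: algebra_simps)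
  moreover have "(x + L * p) div p = x div p + L" using assms by simp
  ultimately have "(a + p * L + p - 1) div p = (a + p - 1) div p + L" unfolding x_def by simp
  then have "b < (a + p - 1) div p + L \<longleftrightarrow> \<not> ((a + p * L + p - 1) div p \<le> b)" by (metis not_le)
  also have "\<dots> \<longleftrightarrow> \<not> (a + p * L \<le> p * b)" using div_ceil[OF assms, of "a + p * L" b] by simp
  finally show ?thesis by (metis not_le)
qed

lemma mult_set:
  fixes a p L :: nat
  assumes "p > 0"
  shows "{N\<in>{a..<a+p*L}. p dvd N} = (\<lambda>b. p * b) ` {(a+p-1) div p..<(a+p-1) div p + L}"
proof (intro set_eqI iffI)
  fix N assume "N \<in> {N\<in>{a..<a+p*L}. p dvd N}"
  then obtain b where "N = p * b" "a \<le> p * b" "p * b < a + p * L" by (auto elim: dvdE)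
  then show "N \<in> (\<lambda>b. p * b) ` {(a+p-1) div p..<(a+p-1) div p + L}"
    using div_ceil[OF assms, of a b] div_ceil2[OF assms, of b a L] by auto
next
  fix N assume "N \<in> (\<lambda>b. p * b) ` {(a+p-1) div p..<(a+p-1) div p + L}"
  then obtain b where "b \<in> {(a+p-1) div p..<(a+p-1) div p + L}" "N = p * b" by blast
  then have "N = p * b" "(a+p-1) div p \<le> b" "b < (a+p-1) div p + L" by auto
  then show "N \<in> {N\<in>{a..<a+p*L}. p dvd N}"
    using div_ceil[OF assms, of a b] div_ceil2[OF assms, of b a L] by auto
qed

lemma window:
  assumes p: "prime p" "odd p" and a: "a \<ge> 1"
  shows "\<exists>b\<ge>1. int p dvd ((\<Sum>N\<in>{a..<a+p^s}. u p N) - u p b)"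
  using a
proof (induction s arbitrary: a)
  case 0 then show ?case by auto
next
  case (Suc s a)
  have p0: "p > 0" using p prime_gt_0_nat by simp
  define L where "L = p ^ s"
  define a' where "a' = (a + p - 1) div p"
  have a'1: "a' \<ge> 1" using div_ceil[OF p0, of a 0] Suc.prems unfolding a'_def by simp
  define phi where "phi N = (if p dvd N then 0 else ell p (N mod p))" for N
  have per: "phi (N + p) = phi N" for N unfolding phi_def by simp
  have phi0: "(\<Sum>N\<in>{0..<p}. phi N) = 0"
  proof -
    have "{0..<p} = insert 0 {1..p-1}" using p0 by auto
    then have "(\<Sum>N\<in>{0..<p}. phi N) = (\<Sum>N\<in>{1..p-1}. phi N)" by (simp add: phi_def)
    also have "\<dots> = (\<Sum>N\<in>{1..p-1}. ell p N)"
      by (rule sum.cong[OF refl]) (auto simp: phi_def dest: dvd_imp_le)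
    finally show ?thesis using ell_sum[OF p] by simp
  qed
  have spl: "u p N = (if p dvd N then u p N else 0) + phi N" for N
    unfolding phi_def by (auto simp: u_nondvd)
  have "(\<Sum>N\<in>{a..<a+p*L}. u p N) = (\<Sum>N\<in>{a..<a+p*L}. if p dvd N then u p N else 0) + (\<Sum>N\<in>{a..<a+p*L}. phi N)"
    by (subst spl) (simp add: sum.distrib)
  also have "(\<Sum>N\<in>{a..<a+p*L}. phi N) = 0"
    using sum_blocks[of phi p a L] per p0 phi0 by simp
  also have "(\<Sum>N\<in>{a..<a+p*L}. if p dvd N then u p N else 0) = (\<Sum>N\<in>{N\<in>{a..<a+p*L}. p dvd N}. u p N)"
    by (rule sum.inter_filter[symmetric]) simp
  also have "\<dots> = (\<Sum>b\<in>{a'..<a'+L}. u p (p * b))"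
    unfolding mult_set[OF p0] a'_def by (subst sum.reindex) (use p0 in \<open>auto simp: inj_on_def\<close>)
  also have "\<dots> = (\<Sum>b\<in>{a'..<a'+L}. u p b)"
    by (rule sum.cong[OF refl]) (use a'1 u_mult[OF p(1)] in auto)
  finally have eq: "(\<Sum>N\<in>{a..<a+p^Suc s}. u p N) = (\<Sum>b\<in>{a'..<a'+p^s}. u p b)"
    unfolding L_def by (simp add: mult.commute)
  show ?case unfolding eq using Suc.IH[OF a'1] .
qed

theorem theorem3p1:
  fixes p s n :: nat
  assumes "prime p" and "p \<ge> 3" and "s \<ge> 1" and "n > p ^ s"
  shows "multiplicity (int p) (A p ((p - 1) * (p ^ s - 1)) n) = 1"
proof -
  have odd: "odd p" using assms(1,2) prime_odd_nat by simp
  note pp = assms(1) odd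
  have p0: "p > 0" using assms(2) by simp
  define K where "K = p^s - 1"
  define F where "F = (\<Prod>i<Suc n. geo (p^i))"
  define R where "R = (\<Sum>i<Suc n. rho p (p^i))"
  define P where "P = fps_const (int p)"
  define a0 where "a0 = A p ((p - 1) * K) n"
  have a0F: "a0 = (F ^ ((p - 1) * K)) $ n" unfolding a0_def F_def using A_eq[of p] p0 by simp
  have c1: "cg (int p ^ 2) (F ^ ((p - 1) * K)) ((1 - fps_X) ^ K * geo (p ^ Suc n) ^ K * (1 - P * R))"
    unfolding K_def F_def R_def P_def by (rule Fk[OF pp assms(3)])
  have ps1: "p ^ s \<ge> 1" using p0 by simp
  have "n < 2 ^ n" by simp
  also have "2 ^ n \<le> p ^ n" using assms(2) by (simp add: power_mono)
  also have "p ^ n \<le> p ^ Suc n" using p0 by simp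
  finally have nlt: "n < p ^ Suc n" .
  have "((1 - fps_X) ^ K * geo (p ^ Suc n) ^ K * (1 - P * R)) $ n = (((1 - fps_X) ^ K * (1 - P * R)) * geo (p ^ Suc n) ^ K) $ n"
    by (simp only: mult_ac)
  also have "\<dots> = ((1 - fps_X) ^ K * (1 - P * R)) $ n"
    by (rule geo_pow_low) (use p0 nlt in simp_all)
  also have "(1 - fps_X) ^ K * (1 - P * R) = (1 - fps_X) ^ K - P * ((1 - fps_X) ^ K * R)"
    by (simp add: algebra_simps)
  also have "((1 - fps_X) ^ K - P * ((1 - fps_X) ^ K * R)) $ n = ((1 - fps_X :: int fps) ^ K) $ n - int p * ((1 - fps_X) ^ K * R) $ n"
    unfolding P_def by simp
  also have "((1 - fps_X :: int fps) ^ K) $ n = 0"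
    by (rule one_minus_X_pow_nth) (use assms(4) ps1 in \<open>simp add: K_def\<close>)
  finally have e1: "((1 - fps_X) ^ K * geo (p ^ Suc n) ^ K * (1 - P * R)) $ n = - (int p * ((1 - fps_X) ^ K * R) $ n)"
    by simp
  define T where "T = ((1 - fps_X) ^ K * R) $ n"
  have d2: "int p ^ 2 dvd a0 + int p * T"
    using cg_nth[OF c1, of n] unfolding a0F[symmetric] e1 T_def by simp
  have c2: "cg (int p) ((1 - fps_X) ^ K * R) (((1 - fps_X ^ (p ^ s)) * geo 1) * R)"
    unfolding K_def by (rule cg_mult[OF phi[OF pp assms(3)] cg_refl])
  define W where "W = (\<Sum>N\<in>{n+1-p^s..<n+1}. u p N)"
  have "(((1 - fps_X ^ (p ^ s)) * geo 1) * R) $ n = (\<Sum>N\<in>{n+1-p^s..<n+1}. R $ N)"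
    by (rule window_conv) (use assms(4) in simp)
  also have "\<dots> = W" unfolding W_def R_def
    by (rule sum.cong[OF refl]) (rule R_nth[OF assms(1)], use assms(4) in auto)
  finally have d3: "int p dvd T - W" using cg_nth[OF c2, of n] unfolding T_def by simp
  have a1: "n + 1 - p ^ s \<ge> 1" using assms(4) by simp
  obtain b where b: "b \<ge> 1" "int p dvd ((\<Sum>N\<in>{n+1-p^s..<n+1-p^s+p^s}. u p N) - u p b)"
    using window[OF pp a1, of s] by blast
  have "n + 1 - p ^ s + p ^ s = n + 1" using assms(4) by simp
  then have d4: "int p dvd W - u p b" using b(2) unfolding W_def by simp
  have nz: "\<not> int p dvd u p b" by (rule u_nz[OF assms(1)]) (use b(1) in simp)
  have pa: "int p dvd a0"
  proof -
    have "int p dvd int p ^ 2" by (simp add: power2_eq_square)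
    then have "int p dvd a0 + int p * T" using d2 by (rule dvd_trans)
    moreover have "int p dvd int p * T" by simp
    ultimately have "int p dvd (a0 + int p * T) - int p * T" by (rule dvd_diff)
    then show ?thesis by simp
  qed
  have npa: "\<not> int p ^ 2 dvd a0"
  proof
    assume h: "int p ^ 2 dvd a0"
    have "int p ^ 2 dvd (a0 + int p * T) - a0" using d2 h by (rule dvd_diff)
    then have "int p ^ 2 dvd int p * T" by simp
    then have "int p * int p dvd int p * T" by (simp add: power2_eq_square)
    then have "int p dvd T" using p0 by simp
    then have "int p dvd T - (T - W)" using d3 by (rule dvd_diff)
    then have "int p dvd W" by simp
    then have "int p dvd W - (W - u p b)" using d4 by (rule dvd_diff)
    then have "int p dvd u p b" by simp
    then show False using nz by simp
  qed
  have "multiplicity (int p) a0 = 1"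
    by (rule multiplicity_eqI) (use pa npa in \<open>simp_all add: power2_eq_square\<close>)
  then show ?thesis unfolding a0_def K_def .
qed

end
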